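(* Let $\mathcal{C}$ be a PL-cograph on a point set $\mathcal{P}$ that takes at least two distinct values, and let $X\neq Y$ be points of $\mathcal{P}$. Let $O$ be a point such that $e=\mathcal{C}(X,Y)$, $f=\mathcal{C}(O,X)$ and $g=\mathcal{C}(O,Y)$ are pairwise distinct (such a point exists). For each point $P\notin\{X,Y\}$ define its label $\lambda(P)$ to be the ordered pair $(\mathcal{C}(P,X),\mathcal{C}(P,Y))$ if $\mathcal{C}(P,X)\neq\mathcal{C}(P,Y)$, and the single edge $\mathcal{C}(P,O)$ if $\mathcal{C}(P,X)=\mathcal{C}(P,Y)$ (labels of the two kinds being regarded as different). Then distinct points $P\neq Q$ in $\mathcal{P}\setminus\{X,Y\}$ have distinct labels, i.e. each such point is uniquely determined by its label.
   Context: A cograph is a function $\mathcal{C}$ assigning to each unordered pair $\{P,Q\}$ of distinct elements of a set $\mathcal{P}$ (points) a value $\mathcal{C}(P,Q)$ (an edge). A PL-cograph is a cograph satisfying: (1) for distinct points $P,Q,R$, if $\mathcal{C}(P,Q)=\mathcal{C}(Q,R)$ then $\mathcal{C}(P,Q)=\mathcal{C}(P,R)$; (2) for distinct points $P,Q,R,S$, if $\mathcal{C}(P,Q)=\mathcal{C}(R,S)$ then $\mathcal{C}(P,Q)=\mathcal{C}(P,R)=\mathcal{C}(P,S)=\mathcal{C}(Q,R)=\mathcal{C}(Q,S)$. *)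

theory Defs
  imports Main
begin

text \<open>A cograph on the point set Pts is a function C assigning a value to each
  unordered pair {P,Q} of distinct points; we model it as a function on sets,
  only its values on two-element subsets {P,Q} (P \<noteq> Q, P,Q \<in> Pts) matter.\<close>

definition PL_cograph :: "'p set \<Rightarrow> ('p set \<Rightarrow> 'e) \<Rightarrow> bool" where
  "PL_cograph Pts C \<longleftrightarrow>
     (\<forall>P\<in>Pts. \<forall>Q\<in>Pts. \<forall>R\<in>Pts. P \<noteq> Q \<and> P \<noteq> R \<and> Q \<noteq> R \<longrightarrow>
        C {P,Q} = C {Q,R} \<longrightarrow> C {P,Q} = C {P,R}) \<and>
     (\<forall>P\<in>Pts. \<forall>Q\<in>Pts. \<forall>R\<in>Pts. \<forall>S\<in>Pts.
        P \<noteq> Q \<and> P \<noteq> R \<and> P \<noteq> S \<and> Q \<noteq> R \<and> Q \<noteq> S \<and> R \<noteq> S \<longrightarrow>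
        C {P,Q} = C {R,S} \<longrightarrow>
        C {P,Q} = C {P,R} \<and> C {P,Q} = C {P,S} \<and> C {P,Q} = C {Q,R} \<and> C {P,Q} = C {Q,S})"

definition cograph_nonconstant :: "'p set \<Rightarrow> ('p set \<Rightarrow> 'e) \<Rightarrow> bool" where
  "cograph_nonconstant Pts C \<longleftrightarrow>
     (\<exists>P\<in>Pts. \<exists>Q\<in>Pts. \<exists>R\<in>Pts. \<exists>S\<in>Pts. P \<noteq> Q \<and> R \<noteq> S \<and> C {P,Q} \<noteq> C {R,S})"

text \<open>Label of a point: Inl (ordered pair) or Inr (single edge); the sum type
  keeps labels of the two kinds different.\<close>
definition label :: "('p set \<Rightarrow> 'e) \<Rightarrow> 'p \<Rightarrow> 'p \<Rightarrow> 'p \<Rightarrow> 'p \<Rightarrow> ('e \<times> 'e) + 'e" where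
  "label C X Y Z P =
     (if C {P,X} \<noteq> C {P,Y} then Inl (C {P,X}, C {P,Y}) else Inr (C {P,Z}))"

end

theory Submission
  imports Defs
begin

theorem theorem5p1:
  fixes Pts :: "'p set" and C :: "'p set \<Rightarrow> 'e" and X Y Z :: 'p
  assumes "PL_cograph Pts C"
    and "cograph_nonconstant Pts C"
    and "X \<in> Pts" "Y \<in> Pts" "X \<noteq> Y"
    and "Z \<in> Pts" "Z \<noteq> X" "Z \<noteq> Y"
    and "C {X,Y} \<noteq> C {Z,X}" "C {X,Y} \<noteq> C {Z,Y}" "C {Z,X} \<noteq> C {Z,Y}"
  shows "\<forall>P \<in> Pts - {X,Y}. \<forall>Q \<in> Pts - {X,Y}. P \<noteq> Q \<longrightarrow> label C X Y Z P \<noteq> label C X Y Z Q"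
proof (intro ballI impI)
  fix P Q assume P: "P \<in> Pts - {X,Y}" and Q: "Q \<in> Pts - {X,Y}" and PQ: "P \<noteq> Q"
  have A1: "\<And>A B D. A \<in> Pts \<Longrightarrow> B \<in> Pts \<Longrightarrow> D \<in> Pts \<Longrightarrow> A \<noteq> B \<Longrightarrow> A \<noteq> D \<Longrightarrow> B \<noteq> D
      \<Longrightarrow> C {A,B} = C {B,D} \<Longrightarrow> C {A,B} = C {A,D}"
    using assms(1) unfolding PL_cograph_def by blast
  have A2: "\<And>A B D E. A \<in> Pts \<Longrightarrow> B \<in> Pts \<Longrightarrow> D \<in> Pts \<Longrightarrow> E \<in> Pts \<Longrightarrow>
      A \<noteq> B \<Longrightarrow> A \<noteq> D \<Longrightarrow> A \<noteq> E \<Longrightarrow> B \<noteq> D \<Longrightarrow> B \<noteq> E \<Longrightarrow> D \<noteq> E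
      \<Longrightarrow> C {A,B} = C {D,E} \<Longrightarrow> C {A,B} = C {B,D}"
    using assms(1) unfolding PL_cograph_def by blast
  have com: "\<And>A B. {A,B} = {B,A}" by blast
  show "label C X Y Z P \<noteq> label C X Y Z Q"
  proof
    assume L: "label C X Y Z P = label C X Y Z Q"
    show False
    proof (cases "C {P,X} \<noteq> C {P,Y}")
      case True
      then have "C {Q,X} \<noteq> C {Q,Y}" "C {P,X} = C {Q,X}" "C {P,Y} = C {Q,Y}"
        using L unfolding label_def by (auto split: if_splits)
      moreover have "C {P,X} = C {P,Q}"
        using A1[of P X Q] P Q PQ assms(3) \<open>C {P,X} = C {Q,X}\<close> by (metis DiffE com insertCI)
      moreover have "C {P,Y} = C {P,Q}"
        using A1[of P Y Q] P Q PQ assms(4) \<open>C {P,Y} = C {Q,Y}\<close> by (metis DiffE com insertCI)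
      ultimately show False using True by simp
    next
      case False
      then have e1: "C {P,X} = C {P,Y}" "C {Q,X} = C {Q,Y}" "C {P,Z} = C {Q,Z}"
        using L unfolding label_def by (auto split: if_splits)
      have PZ: "P \<noteq> Z" using e1 assms(11) com by metis
      have QZ: "Q \<noteq> Z" using e1 assms(11) com by metis
      have Pp: "P \<in> Pts" "P \<noteq> X" "P \<noteq> Y" using P by auto
      have Qp: "Q \<in> Pts" "Q \<noteq> X" "Q \<noteq> Y" using Q by auto
      have a: "C {X,P} = C {X,Y}"
        using A1[of X P Y] Pp assms(3,4,5) e1 com by metis
      have b: "C {X,Q} = C {X,Y}"
        using A1[of X Q Y] Qp assms(3,4,5) e1 com by metis
      have pq: "C {P,X} = C {P,Q}"
        using A1[of P X Q] Pp Qp PQ assms(3) a b com by metis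
      have c: "C {P,Z} = C {P,Q}"
        using A1[of P Z Q] Pp Qp PQ PZ QZ assms(6) e1 com by metis
      have "C {P,Z} = C {Z,X}"
        using A2[of P Z X Y] Pp PZ assms(3-8) a c pq com by metis
      then show False using assms(9) a c pq com by metis
    qed
  qed
qed

end
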